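(* For $i=1,2$ let $\mathbf{L}_i=(L_i,\le)$ be a finite lattice with more than two elements and let $(R_i,\vee,\circ)$ be a subsemiring of $(\mathrm{Res}_1(\mathbf{L}_i),\vee,\circ)$ such that $f_{a,0}\in R_i$ for all $a\in L_i\setminus\{1\}$, every $f\in R_i$ satisfies $f_{a,0}\le f$ for some $a\in L_i\setminus\{1\}$, and for all $a\in L_i\setminus\{0,1\}$, $b\in L_i$ there exists $f\in R_i$ with $f(a)=b$. If $(R_1,\vee,\circ)$ and $(R_2,\vee,\circ)$ are isomorphic semirings, then $\mathbf{L}_1$ and $\mathbf{L}_2$ are isomorphic.
   Context: For a finite lattice $\mathbf{L}$ with least element $0$ and greatest element $1$, $\mathrm{Res}_1(\mathbf{L})$ is the set of maps $f:L\to L$ preserving binary joins with $f(0)=0$ and $f(1)=1$, a semiring under pointwise join $\vee$ and composition $\circ$, ordered pointwise. $f_{a,b}(x)=b$ if $x\le a$ and $1$ otherwise. *)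

theory Defs
  imports Main
begin

definition Res1 :: "('a::bounded_lattice \<Rightarrow> 'a) set" where
  "Res1 = {f. (\<forall>x y. f (sup x y) = sup (f x) (f y)) \<and> f bot = bot \<and> f top = top}"

definition fab :: "'a::bounded_lattice \<Rightarrow> 'a \<Rightarrow> 'a \<Rightarrow> 'a" where
  "fab a b = (\<lambda>x. if x \<le> a then b else top)"

definition subsemiring_Res1 :: "('a::bounded_lattice \<Rightarrow> 'a) set \<Rightarrow> bool" where
  "subsemiring_Res1 R \<longleftrightarrow> R \<subseteq> Res1 \<and>
     (\<forall>f\<in>R. \<forall>g\<in>R. (\<lambda>x. sup (f x) (g x)) \<in> R \<and> f \<circ> g \<in> R)"

definition good_R :: "('a::bounded_lattice \<Rightarrow> 'a) set \<Rightarrow> bool" where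
  "good_R R \<longleftrightarrow> subsemiring_Res1 R \<and>
     (\<forall>a. a \<noteq> top \<longrightarrow> fab a bot \<in> R) \<and>
     (\<forall>f\<in>R. \<exists>a. a \<noteq> top \<and> fab a bot \<le> f) \<and>
     (\<forall>a b. a \<noteq> bot \<and> a \<noteq> top \<longrightarrow> (\<exists>f\<in>R. f a = b))"

definition semiring_iso ::
  "(('a::bounded_lattice \<Rightarrow> 'a) \<Rightarrow> ('b::bounded_lattice \<Rightarrow> 'b)) \<Rightarrow> ('a \<Rightarrow> 'a) set \<Rightarrow> ('b \<Rightarrow> 'b) set \<Rightarrow> bool" where
  "semiring_iso \<phi> R1 R2 \<longleftrightarrow> bij_betw \<phi> R1 R2 \<and>
     (\<forall>f\<in>R1. \<forall>g\<in>R1. \<phi> (\<lambda>x. sup (f x) (g x)) = (\<lambda>x. sup (\<phi> f x) (\<phi> g x))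
                   \<and> \<phi> (f \<circ> g) = \<phi> f \<circ> \<phi> g)"

definition lattice_iso :: "('a::lattice \<Rightarrow> 'b::lattice) \<Rightarrow> bool" where
  "lattice_iso h \<longleftrightarrow> bij h \<and> (\<forall>x y. x \<le> y \<longleftrightarrow> h x \<le> h y)"

end

theory Submission
  imports Defs
begin

lemma tb_ne:
  assumes "card (UNIV :: 'a::{finite,bounded_lattice} set) > 2"
  shows "(top::'a) \<noteq> bot"
proof
  assume h: "(top::'a) = bot"
  have "\<And>x::'a. x = bot" by (metis h bot.extremum_unique top_greatest)
  then have "(UNIV::'a set) = {bot}" by auto
  then have "card (UNIV::'a set) = 1" by (metis card.empty card.insert empty_iff finite.intros(1) One_nat_def)
  with assms show False by simp
qed

lemma res_mono:
  assumes "f \<in> Res1" "x \<le> y" shows "f x \<le> f y"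
proof -
  have "f y = f (sup x y)" using assms(2) by (simp add: sup_absorb2)
  also have "\<dots> = sup (f x) (f y)" using assms(1) by (simp add: Res1_def)
  finally show ?thesis by (metis sup_ge1)
qed

lemma res_supfin:
  assumes "f \<in> Res1" "finite A" "A \<noteq> {}" "\<forall>x\<in>A. f x = bot"
  shows "f (Sup_fin A) = (bot::'a::bounded_lattice)"
  using assms(2,3,4)
proof (induction A rule: finite_ne_induct)
  case (singleton x) then show ?case by simp
next
  case (insert x F)
  then show ?case using assms(1) by (simp add: Sup_fin.insert Res1_def)
qed

lemma S_char:
  fixes R :: "('a::{finite,bounded_lattice} \<Rightarrow> 'a) set"
  assumes g: "good_R R" and tb: "(top::'a) \<noteq> bot"
  shows "{f\<in>R. \<forall>g\<in>R. g \<circ> f = f} = {fab a bot | a. a \<noteq> top}"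
proof
  have RR: "R \<subseteq> Res1" using g by (simp add: good_R_def subsemiring_Res1_def)
  show "{fab a bot | a. a \<noteq> top} \<subseteq> {f\<in>R. \<forall>g\<in>R. g \<circ> f = f}"
  proof clarify
    fix a :: 'a assume a: "a \<noteq> top"
    have "fab a bot \<in> R" using g a by (simp add: good_R_def)
    moreover have "\<forall>g\<in>R. g \<circ> fab a bot = fab a bot"
    proof
      fix g assume "g \<in> R"
      then have "g \<in> Res1" using RR by auto
      then show "g \<circ> fab a bot = fab a bot"
        by (auto simp: fab_def Res1_def fun_eq_iff)
    qed
    ultimately show "fab a bot \<in> R \<and> (\<forall>g\<in>R. g \<circ> fab a bot = fab a bot)" by simp
  qed
  show "{f\<in>R. \<forall>g\<in>R. g \<circ> f = f} \<subseteq> {fab a bot | a. a \<noteq> top}"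
  proof clarify
    fix f assume fR: "f \<in> R" and hfix: "\<forall>g\<in>R. g \<circ> f = f"
    have fres: "f \<in> Res1" using fR RR by auto
    have vals: "f x = bot \<or> f x = top" for x
    proof (rule ccontr)
      assume "\<not> (f x = bot \<or> f x = top)"
      then obtain g where "g \<in> R" "g (f x) = bot" using g unfolding good_R_def by blast
      moreover have "g (f x) = f x" using hfix \<open>g \<in> R\<close> by (metis comp_apply)
      ultimately show False using \<open>\<not> (f x = bot \<or> f x = top)\<close> by simp
    qed
    define Z where "Z = {x. f x = bot}"
    have Zne: "Z \<noteq> {}" using fres unfolding Z_def Res1_def by blast
    define a where "a = Sup_fin Z"
    have fa: "f a = bot" unfolding a_def by (rule res_supfin[OF fres]) (use Zne in \<open>auto simp: Z_def\<close>)
    have "a \<noteq> top" using fa fres tb by (auto simp: Res1_def)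
    moreover have "f = fab a bot"
    proof
      fix x
      show "f x = fab a bot x"
      proof (cases "x \<le> a")
        case True
        then have "f x \<le> bot" using res_mono[OF fres True] fa by simp
        then show ?thesis using True by (simp add: fab_def bot_unique)
      next
        case False
        then have "x \<notin> Z" unfolding a_def using Sup_fin.coboundedI[of Z x] by auto
        then have "f x = top" using vals by (auto simp: Z_def)
        then show ?thesis using False by (simp add: fab_def)
      qed
    qed
    ultimately show "\<exists>a. f = fab a bot \<and> a \<noteq> top" by blast
  qed
qed

lemma fab_le:
  assumes "(top::'a::bounded_lattice) \<noteq> bot"
  shows "fab a (bot::'a) \<le> fab b bot \<longleftrightarrow> b \<le> a"
proof
  assume "fab a bot \<le> fab b bot"
  then have "fab a bot b \<le> fab b bot b" by (simp add: le_fun_def)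
  then show "b \<le> a" using assms by (auto simp: fab_def split: if_splits dest: top_le)
next
  assume "b \<le> a" then show "fab a bot \<le> fab b bot"
    by (auto simp: le_fun_def fab_def intro: order_trans)
qed

lemma iso_le:
  assumes "semiring_iso \<phi> R1 R2" "subsemiring_Res1 R1" "f \<in> R1" "g \<in> R1"
  shows "f \<le> g \<longleftrightarrow> \<phi> f \<le> \<phi> g"
proof -
  have inj: "inj_on \<phi> R1" using assms(1) by (simp add: semiring_iso_def bij_betw_def)
  have sR: "(\<lambda>x. sup (f x) (g x)) \<in> R1" using assms(2-4) by (simp add: subsemiring_Res1_def)
  have ph: "\<phi> (\<lambda>x. sup (f x) (g x)) = (\<lambda>x. sup (\<phi> f x) (\<phi> g x))"
    using assms(1,3,4) by (simp add: semiring_iso_def)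
  have "f \<le> g \<longleftrightarrow> (\<lambda>x. sup (f x) (g x)) = g"
    by (auto simp: le_fun_def fun_eq_iff sup_absorb2 intro: sup_ge1[THEN order_trans] dest: sym) (metis sup_ge1)
  also have "\<dots> \<longleftrightarrow> \<phi> (\<lambda>x. sup (f x) (g x)) = \<phi> g"
    using inj sR assms(4) by (metis inj_on_def)
  also have "\<dots> \<longleftrightarrow> \<phi> f \<le> \<phi> g" unfolding ph
    by (auto simp: le_fun_def fun_eq_iff sup_absorb2) (metis sup_ge1)
  finally show ?thesis .
qed

theorem proposition6p4:
  fixes R1 :: "('a::{finite,bounded_lattice} \<Rightarrow> 'a) set"
    and R2 :: "('b::{finite,bounded_lattice} \<Rightarrow> 'b) set"
  assumes "card (UNIV :: 'a set) > 2" and "card (UNIV :: 'b set) > 2"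
    and "good_R R1" and "good_R R2"
    and "\<exists>\<phi>. semiring_iso \<phi> R1 R2"
  shows "\<exists>h :: 'a \<Rightarrow> 'b. lattice_iso h"
proof -
  obtain \<phi> where phi: "semiring_iso \<phi> R1 R2" using assms(5) by blast
  have tb1: "(top::'a) \<noteq> bot" by (rule tb_ne[OF assms(1)])
  have tb2: "(top::'b) \<noteq> bot" by (rule tb_ne[OF assms(2)])
  have bij: "bij_betw \<phi> R1 R2" using phi by (simp add: semiring_iso_def)
  have comp: "\<And>f g. f \<in> R1 \<Longrightarrow> g \<in> R1 \<Longrightarrow> \<phi> (f \<circ> g) = \<phi> f \<circ> \<phi> g"
    using phi by (simp add: semiring_iso_def)
  have ss1: "subsemiring_Res1 R1" using assms(3) by (simp add: good_R_def)
  have ss2: "subsemiring_Res1 R2" using assms(4) by (simp add: good_R_def)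
  have c1: "\<And>f g. f \<in> R1 \<Longrightarrow> g \<in> R1 \<Longrightarrow> f \<circ> g \<in> R1" using ss1 by (simp add: subsemiring_Res1_def)
  define S1 where "S1 = {f\<in>R1. \<forall>g\<in>R1. g \<circ> f = f}"
  define S2 where "S2 = {f\<in>R2. \<forall>g\<in>R2. g \<circ> f = f}"
  have im: "\<phi> ` S1 = S2"
  proof
    show "\<phi> ` S1 \<subseteq> S2"
    proof clarify
      fix f assume "f \<in> S1"
      then have fR: "f \<in> R1" and fx: "\<forall>g\<in>R1. g \<circ> f = f" by (auto simp: S1_def)
      have "\<forall>g'\<in>R2. g' \<circ> \<phi> f = \<phi> f"
      proof
        fix g' assume "g' \<in> R2"
        then obtain g where "g \<in> R1" "g' = \<phi> g" using bij by (metis bij_betw_def imageE)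
        then show "g' \<circ> \<phi> f = \<phi> f" using comp fR fx by metis
      qed
      moreover have "\<phi> f \<in> R2" using fR bij by (metis bij_betw_def imageI)
      ultimately show "\<phi> f \<in> S2" by (simp add: S2_def)
    qed
    show "S2 \<subseteq> \<phi> ` S1"
    proof
      fix f' assume "f' \<in> S2"
      then have fR: "f' \<in> R2" and fx: "\<forall>g\<in>R2. g \<circ> f' = f'" by (auto simp: S2_def)
      obtain f where f: "f \<in> R1" "f' = \<phi> f" using fR bij by (metis bij_betw_def imageE)
      have "\<forall>g\<in>R1. g \<circ> f = f"
      proof
        fix g assume g: "g \<in> R1"
        have "\<phi> g \<in> R2" using g bij by (metis bij_betw_def imageI)
        then have "\<phi> (g \<circ> f) = \<phi> f" using comp[OF g f(1)] fx f(2) by simp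
        then show "g \<circ> f = f" using bij c1[OF g f(1)] f(1) by (metis bij_betw_def inj_on_def)
      qed
      then show "f' \<in> \<phi> ` S1" using f by (auto simp: S1_def)
    qed
  qed
  have S1c: "S1 = {fab a bot | a. a \<noteq> top}" unfolding S1_def by (rule S_char[OF assms(3) tb1])
  have S2c: "S2 = {fab a bot | a. a \<noteq> top}" unfolding S2_def by (rule S_char[OF assms(4) tb2])
  have inS1R: "fab a bot \<in> R1" if "a \<noteq> top" for a :: 'a using that assms(3) by (simp add: good_R_def)
  have ex: "\<exists>b. b \<noteq> top \<and> \<phi> (fab a bot) = fab b bot" if "a \<noteq> top" for a :: 'a
  proof -
    have "fab a bot \<in> S1" using S1c that by auto
    then have "\<phi> (fab a bot) \<in> S2" using im by auto
    then show ?thesis using S2c by auto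
  qed
  define h where "h a = (if a = top then top else (SOME b. b \<noteq> top \<and> \<phi> (fab a bot) = fab b bot))" for a :: 'a
  have hp: "h a \<noteq> top \<and> \<phi> (fab a bot) = fab (h a) bot" if "a \<noteq> top" for a
    using someI_ex[OF ex[OF that]] that by (simp add: h_def)
  have ht: "h top = top" by (simp add: h_def)
  have ord: "x \<le> y \<longleftrightarrow> h x \<le> h y" for x y
  proof (cases "x = top \<or> y = top")
    case True
    then show ?thesis using hp ht by (metis top.extremum_unique top_greatest)
  next
    case False
    then have "x \<le> y \<longleftrightarrow> fab y bot \<le> fab x bot" using fab_le[OF tb1] by simp
    also have "\<dots> \<longleftrightarrow> \<phi> (fab y bot) \<le> \<phi> (fab x bot)"
      using iso_le[OF phi ss1] inS1R False by blast
    also have "\<dots> \<longleftrightarrow> h x \<le> h y" using hp False fab_le[OF tb2] by simp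
    finally show ?thesis .
  qed
  have "inj h" by (rule injI) (metis ord order_antisym order_refl)
  moreover have "surj h"
  proof -
    have "b \<in> range h" for b :: 'b
    proof (cases "b = top")
      case True then show ?thesis using ht by (metis rangeI)
    next
      case False
      then have "fab b bot \<in> \<phi> ` S1" using im S2c by auto
      then obtain a where a: "a \<noteq> top" "fab b bot = \<phi> (fab a bot)" using S1c by auto
      then have "fab b bot = fab (h a) bot" using hp by simp
      then have "b = h a" using fab_le[OF tb2, of b "h a"] fab_le[OF tb2, of "h a" b] by (metis order_antisym order_refl)
      then show ?thesis by simp
    qed
    then show ?thesis by auto
  qed
  ultimately show ?thesis using ord by (auto simp: lattice_iso_def bij_def)
qed

end
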